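(* Fix $\eta\in[0,1)$. Let $\mathbf{Struct}^{\mathrm{fib}}_\eta$ be the full subcategory of $\mathbf{Struct}_\eta$ whose objects $\mathcal M=(X,\mathcal A,\mu,\mu^{\otimes2},R,I,\Pi_R,G,E_0,\eta)$ satisfy: $\{r\}\in\mathcal A$ and $\Pi_R^{-1}(\{r\})\in\mathcal A$ for every $r\in R$, and either (R-fin) $R$ is finite, or (R-ctbl) $R$ is countable, $\mathcal A$ is a $\sigma$-algebra and $\mu$ is $\sigma$-additive. Let $\mathbf{Struct}^{\mathrm{id}}_\eta$ be the full subcategory of $\mathbf{Struct}_\eta$ of objects with $R=X$, $I=\varnothing$, $\Pi_R=\mathrm{id}_X$. For an object $\mathcal M$ of $\mathbf{Struct}^{\mathrm{fib}}_\eta$ let $\mathcal M|_R=(R,\ \mathcal A\cap\mathcal P(R),\ \mu|_R,\ \mu^{\otimes2}|_{R\times R},\ R,\ \varnothing,\ \mathrm{id}_R,\ G\cap(R\times R),\ \mu(R),\ \eta)$. Then $\mathcal M|_R$ is an object of $\mathbf{Struct}^{\mathrm{id}}_\eta$ (in particular $\mu(R)>0$), every morphism $\phi:\mathcal M\to\mathcal M'$ in $\mathbf{Struct}^{\mathrm{fib}}_\eta$ satisfies $\phi(R)\subseteq R'$ and its restriction $\phi|_R:R\to R'$ is a morphism $\mathcal M|_R\to\mathcal M'|_{R'}$, and the assignment $\mathcal M\mapsto\mathcal M|_R$, $\phi\mapsto\phi|_R$ is a functor $\mathbf{Struct}^{\mathrm{fib}}_\eta\to\mathbf{Struct}^{\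mathrm{id}}_\eta$.
   Context: An admissible structural model is a tuple $(X,\mathcal A,\mu,\mu^{\otimes2},R,I,\Pi_R,G,E_0,\eta)$ with $X$ nonempty, $\mathcal A\subseteq\mathcal P(X)$ an algebra, $\mu:\mathcal A\to[0,\infty)$ finitely additive, $\mu^{\otimes2}$ finitely additive on the algebra $\mathcal A\otimes\mathcal A$ generated by rectangles with $\mu^{\otimes2}(B_1\times B_2)=\mu(B_1)\mu(B_2)$, $R,I\in\mathcal A$ disjoint, $\Pi_R:X\to R$ a map, $G\in\mathcal A\otimes\mathcal A$, $E_0>0$, $\eta\in[0,1]$, satisfying: Axiom I: $\Pi_R\circ\Pi_R=\Pi_R$, $\Pi_R|_R=\mathrm{id}_R$, $\Pi_R^{-1}(B)\in\mathcal A$ for $B\in\mathcal A$, $B\subseteq R$; Axiom II: $G$ reflexive, symmetric, $G\circ G=G$ (relational composition); Axiom III: $\mu(R)+\mu(I)=E_0$, $\mu(\Pi_R^{-1}(B))=\mu(B)$ for $B\in\mathcal A$, $B\subseteq R$, and for all $B\in\mathcal A$, $\mu^{\otimes2}((B\times X)\cap G)=\mu(B)+\eta\,\mu^{\otimes2}((\Pi_R^{-1}(B)\times X)\cap G)$. A morphism $\phi:\mathcal M\to\mathcal M'$ between admissible structural models $\mathcal M=(X,\mathcal A,\mu,\mu^{\otimes2},R,I,\Pi_R,G,E_0,\eta)$ and $\mathcal M'=(X',\mathcal A',\mu',\mu'^{\otimes2},R',I',\Pi_{R'},G',E_0',\eta)$ is a map $\phi:X\to X'$ such that: (M1) $\phi^{-1}(B')\in\mathcal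 A$ for all $B'\in\mathcal A'$ and $(\phi\times\phi)^{-1}(S')\in\mathcal A\otimes\mathcal A$ for all $S'\in\mathcal A'\otimes\mathcal A'$; (M2) $\phi\circ\Pi_R=\Pi_{R'}\circ\phi$; (M3) $(x,y)\in G$ implies $(\phi(x),\phi(y))\in G'$; (M4) $\mu(\phi^{-1}(B'))=\mu'(B')$ for all $B'\in\mathcal A'$ and $\mu^{\otimes2}((\phi\times\phi)^{-1}(S'))=\mu'^{\otimes2}(S')$ for all $S'\in\mathcal A'\otimes\mathcal A'$. $\mathbf{Struct}_\eta$ is the category of admissible structural models with parameter $\eta$ and these morphisms. *)

theory Defs
  imports "HOL-Analysis.Sigma_Algebra" "HOL-Library.FuncSet"
begin

(* An admissible structural model, carried by a type 'a.
   Functions (mu, mu2, Pi) are total HOL functions; only their values on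
   the algebra / on the carrier are meaningful. *)
record 'a smodel =
  carrier :: "'a set"
  alg     :: "'a set set"
  mu      :: "'a set \<Rightarrow> real"
  mu2     :: "('a \<times> 'a) set \<Rightarrow> real"
  Rset    :: "'a set"
  Iset    :: "'a set"
  Pi      :: "'a \<Rightarrow> 'a"
  Grel    :: "('a \<times> 'a) set"
  E0      :: real
  eta     :: real

definition gen_algebra :: "'b set \<Rightarrow> 'b set set \<Rightarrow> 'b set set" where
  "gen_algebra \<Omega> S = \<Inter>{M. algebra \<Omega> M \<and> S \<subseteq> M}"

definition prod_alg :: "'a set \<Rightarrow> 'a set set \<Rightarrow> ('a \<times> 'a) set set" where
  "prod_alg X A = gen_algebra (X \<times> X) {B1 \<times> B2 | B1 B2. B1 \<in> A \<and> B2 \<in> A}"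

definition fin_additive :: "'b set set \<Rightarrow> ('b set \<Rightarrow> real) \<Rightarrow> bool" where
  "fin_additive A m \<longleftrightarrow> (\<forall>B\<in>A. 0 \<le> m B) \<and>
     (\<forall>B1\<in>A. \<forall>B2\<in>A. B1 \<inter> B2 = {} \<longrightarrow> m (B1 \<union> B2) = m B1 + m B2)"

definition sigma_additive :: "'b set set \<Rightarrow> ('b set \<Rightarrow> real) \<Rightarrow> bool" where
  "sigma_additive A m \<longleftrightarrow> (\<forall>F :: nat \<Rightarrow> 'b set. range F \<subseteq> A \<longrightarrow> disjoint_family F
      \<longrightarrow> (\<Union>i. F i) \<in> A \<longrightarrow> (\<lambda>i. m (F i)) sums m (\<Union>i. F i))"

definition admissible :: "'a smodel \<Rightarrow> bool" where
  "admissible M \<longleftrightarrow>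
     (let X = carrier M; A = alg M; \<mu> = mu M; \<mu>2 = mu2 M; R = Rset M; I = Iset M;
          P = Pi M; G = Grel M; AA = prod_alg X A in
       X \<noteq> {} \<and> algebra X A \<and> fin_additive A \<mu> \<and> fin_additive AA \<mu>2 \<and>
       (\<forall>B1\<in>A. \<forall>B2\<in>A. \<mu>2 (B1 \<times> B2) = \<mu> B1 * \<mu> B2) \<and>
       R \<in> A \<and> I \<in> A \<and> R \<inter> I = {} \<and>
       (\<forall>x\<in>X. P x \<in> R) \<and> G \<in> AA \<and> E0 M > 0 \<and> 0 \<le> eta M \<and> eta M \<le> 1 \<and>
       \<comment> \<open>Axiom I\<close>
       (\<forall>x\<in>X. P (P x) = P x) \<and> (\<forall>x\<in>R. P x = x) \<and>
       (\<forall>B\<in>A. B \<subseteq> R \<longrightarrow> {x\<in>X. P x \<in> B} \<in> A) \<and>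
       \<comment> \<open>Axiom II\<close>
       (\<forall>x\<in>X. (x, x) \<in> G) \<and> sym G \<and> G O G = G \<and>
       \<comment> \<open>Axiom III\<close>
       \<mu> R + \<mu> I = E0 M \<and>
       (\<forall>B\<in>A. B \<subseteq> R \<longrightarrow> \<mu> {x\<in>X. P x \<in> B} = \<mu> B) \<and>
       (\<forall>B\<in>A. \<mu>2 ((B \<times> X) \<inter> G) = \<mu> B + eta M * \<mu>2 (({x\<in>X. P x \<in> B} \<times> X) \<inter> G)))"

definition is_morphism :: "'a smodel \<Rightarrow> 'b smodel \<Rightarrow> ('a \<Rightarrow> 'b) \<Rightarrow> bool" where
  "is_morphism M M' \<phi> \<longleftrightarrow>
     admissible M \<and> admissible M' \<and> eta M = eta M' \<and>
     (\<forall>x\<in>carrier M. \<phi> x \<in> carrier M') \<and>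
     \<comment> \<open>M1\<close>
     (\<forall>B'\<in>alg M'. {x\<in>carrier M. \<phi> x \<in> B'} \<in> alg M) \<and>
     (\<forall>S'\<in>prod_alg (carrier M') (alg M').
        {p\<in>carrier M \<times> carrier M. (\<phi> (fst p), \<phi> (snd p)) \<in> S'} \<in> prod_alg (carrier M) (alg M)) \<and>
     \<comment> \<open>M2\<close>
     (\<forall>x\<in>carrier M. \<phi> (Pi M x) = Pi M' (\<phi> x)) \<and>
     \<comment> \<open>M3\<close>
     (\<forall>x y. (x, y) \<in> Grel M \<longrightarrow> (\<phi> x, \<phi> y) \<in> Grel M') \<and>
     \<comment> \<open>M4\<close>
     (\<forall>B'\<in>alg M'. mu M {x\<in>carrier M. \<phi> x \<in> B'} = mu M' B') \<and>
     (\<forall>S'\<in>prod_alg (carrier M') (alg M').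
        mu2 M {p\<in>carrier M \<times> carrier M. (\<phi> (fst p), \<phi> (snd p)) \<in> S'} = mu2 M' S')"

definition struct_obj :: "real \<Rightarrow> 'a smodel \<Rightarrow> bool" where
  "struct_obj \<eta> M \<longleftrightarrow> admissible M \<and> eta M = \<eta>"

definition fib_obj :: "real \<Rightarrow> 'a smodel \<Rightarrow> bool" where
  "fib_obj \<eta> M \<longleftrightarrow> struct_obj \<eta> M \<and>
     (\<forall>r\<in>Rset M. {r} \<in> alg M \<and> {x\<in>carrier M. Pi M x = r} \<in> alg M) \<and>
     (finite (Rset M) \<or>
      (countable (Rset M) \<and> sigma_algebra (carrier M) (alg M) \<and> sigma_additive (alg M) (mu M)))"

definition id_obj :: "real \<Rightarrow> 'a smodel \<Rightarrow> bool" where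
  "id_obj \<eta> M \<longleftrightarrow> struct_obj \<eta> M \<and> Rset M = carrier M \<and> Iset M = {} \<and>
     (\<forall>x\<in>carrier M. Pi M x = x)"

definition restrR :: "'a smodel \<Rightarrow> 'a smodel" where
  "restrR M = \<lparr> carrier = Rset M, alg = {B \<in> alg M. B \<subseteq> Rset M},
     mu = mu M, mu2 = mu2 M, Rset = Rset M, Iset = {}, Pi = (\<lambda>x. x),
     Grel = Grel M \<inter> (Rset M \<times> Rset M), E0 = mu M (Rset M), eta = eta M \<rparr>"

end

theory Submission
  imports Defs
begin

lemma gen_algebra_alg:
  assumes "S \<subseteq> Pow \<Omega>" shows "algebra \<Omega> (gen_algebra \<Omega> S)"
proof -
  have ne: "Pow \<Omega> \<in> {M. algebra \<Omega> M \<and> S \<subseteq> M}"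
    using assms by (auto simp: algebra_iff_Un)
  show ?thesis unfolding algebra_iff_Un
  proof (intro conjI ballI)
    show "gen_algebra \<Omega> S \<subseteq> Pow \<Omega>" unfolding gen_algebra_def using ne by blast
    show "{} \<in> gen_algebra \<Omega> S" unfolding gen_algebra_def by (auto simp: algebra_iff_Un)
  next
    fix a assume "a \<in> gen_algebra \<Omega> S"
    thus "\<Omega> - a \<in> gen_algebra \<Omega> S" unfolding gen_algebra_def by (auto simp: algebra_iff_Un)
  next
    fix a b assume "a \<in> gen_algebra \<Omega> S" "b \<in> gen_algebra \<Omega> S"
    thus "a \<union> b \<in> gen_algebra \<Omega> S" unfolding gen_algebra_def by (auto simp: algebra_iff_Un)
  qed
qed

lemma gen_algebra_sub: "S \<subseteq> gen_algebra \<Omega> S"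
  unfolding gen_algebra_def by blast

lemma gen_algebra_min: "algebra \<Omega> M \<Longrightarrow> S \<subseteq> M \<Longrightarrow> gen_algebra \<Omega> S \<subseteq> M"
  unfolding gen_algebra_def by blast

lemma prod_alg_alg: assumes "algebra X A" shows "algebra (X \<times> X) (prod_alg X A)"
proof -
  have "A \<subseteq> Pow X" using assms by (simp add: algebra_iff_Un)
  hence "{B1 \<times> B2 |B1 B2. B1 \<in> A \<and> B2 \<in> A} \<subseteq> Pow (X \<times> X)" by fastforce
  thus ?thesis unfolding prod_alg_def by (rule gen_algebra_alg)
qed

lemma prod_alg_rect: "B1 \<in> A \<Longrightarrow> B2 \<in> A \<Longrightarrow> B1 \<times> B2 \<in> prod_alg X A"
  unfolding prod_alg_def by (rule subsetD[OF gen_algebra_sub]) blast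

lemma fa_empty: assumes "algebra \<Omega> M" "fin_additive M m" shows "m {} = 0"
proof -
  interpret algebra \<Omega> M by fact
  have "m ({} \<union> {}) = m {} + m {}" using assms(2) unfolding fin_additive_def by blast
  thus ?thesis by simp
qed

lemma fa_diff: assumes "algebra \<Omega> M" "fin_additive M m" "a \<in> M" "b \<in> M" "a \<subseteq> b"
  shows "m b = m a + m (b - a)"
proof -
  interpret algebra \<Omega> M by fact
  have "b - a \<in> M" using assms by auto
  hence "m (a \<union> (b - a)) = m a + m (b - a)" using assms unfolding fin_additive_def by blast
  moreover have "a \<union> (b - a) = b" using assms by auto
  ultimately show ?thesis by simp
qed

lemma fa_nonneg: "fin_additive M m \<Longrightarrow> a \<in> M \<Longrightarrow> 0 \<le> m a"
  unfolding fin_additive_def by blast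

lemma fa_mono: assumes "algebra \<Omega> M" "fin_additive M m" "a \<in> M" "b \<in> M" "a \<subseteq> b"
  shows "m a \<le> m b"
proof -
  interpret algebra \<Omega> M by fact
  have "b - a \<in> M" using assms by auto
  thus ?thesis using fa_diff[OF assms] fa_nonneg[OF assms(2)] by fastforce
qed

lemma fa_un_le: assumes "algebra \<Omega> M" "fin_additive M m" "a \<in> M" "b \<in> M"
  shows "m (a \<union> b) \<le> m a + m b"
proof -
  interpret algebra \<Omega> M by fact
  have "b - a \<in> M" using assms by auto
  hence "m (a \<union> (b - a)) = m a + m (b - a)" using assms unfolding fin_additive_def by blast
  moreover have "a \<union> (b - a) = a \<union> b" by auto
  moreover have "m (b - a) \<le> m b" using fa_mono[OF assms(1,2) \<open>b - a \<in> M\<close> assms(4)] by auto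
  ultimately show ?thesis by simp
qed

lemma prod_alg_sub:
  assumes "algebra X A" "R \<in> A"
  shows "prod_alg R {B \<in> A. B \<subseteq> R} \<subseteq> prod_alg X A"
proof -
  interpret A: algebra X A by fact
  interpret AA: algebra "X \<times> X" "prod_alg X A" by (rule prod_alg_alg[OF assms(1)])
  have RR: "R \<times> R \<in> prod_alg X A" using prod_alg_rect assms by blast
  have "algebra (R \<times> R) {S \<in> prod_alg X A. S \<subseteq> R \<times> R}"
    unfolding algebra_iff_Un
  proof (intro conjI ballI)
    fix a assume "a \<in> {S \<in> prod_alg X A. S \<subseteq> R \<times> R}"
    thus "R \<times> R - a \<in> {S \<in> prod_alg X A. S \<subseteq> R \<times> R}" using RR by auto
  qed auto
  moreover have "{B1 \<times> B2 |B1 B2. B1 \<in> {B \<in> A. B \<subseteq> R} \<and> B2 \<in> {B \<in> A. B \<subseteq> R}}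
     \<subseteq> {S \<in> prod_alg X A. S \<subseteq> R \<times> R}" using prod_alg_rect by blast
  ultimately have "prod_alg R {B \<in> A. B \<subseteq> R} \<subseteq> {S \<in> prod_alg X A. S \<subseteq> R \<times> R}"
    unfolding prod_alg_def[of R] by (rule gen_algebra_min)
  thus ?thesis by blast
qed

lemma prod_alg_trace:
  assumes "algebra X A" "R \<in> A" "S \<in> prod_alg X A"
  shows "S \<inter> (R \<times> R) \<in> prod_alg R {B \<in> A. B \<subseteq> R}"
proof -
  interpret A: algebra X A by fact
  let ?AR = "{B \<in> A. B \<subseteq> R}"
  have RX: "R \<subseteq> X" using assms A.space_closed by auto
  interpret AR: algebra "R \<times> R" "prod_alg R ?AR"
    by (rule prod_alg_alg) (use RX assms in \<open>auto simp: algebra_iff_Un\<close>)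
  have "algebra (X \<times> X) {S. S \<subseteq> X \<times> X \<and> S \<inter> (R \<times> R) \<in> prod_alg R ?AR}"
    unfolding algebra_iff_Un
  proof (intro conjI ballI)
    fix a assume a: "a \<in> {S. S \<subseteq> X \<times> X \<and> S \<inter> (R \<times> R) \<in> prod_alg R ?AR}"
    have "(X \<times> X - a) \<inter> (R \<times> R) = R \<times> R - a \<inter> (R \<times> R)" using RX by auto
    thus "X \<times> X - a \<in> {S. S \<subseteq> X \<times> X \<and> S \<inter> (R \<times> R) \<in> prod_alg R ?AR}" using a by auto
  next
    fix a b assume a: "a \<in> {S. S \<subseteq> X \<times> X \<and> S \<inter> (R \<times> R) \<in> prod_alg R ?AR}"
      and b: "b \<in> {S. S \<subseteq> X \<times> X \<and> S \<inter> (R \<times> R) \<in> prod_alg R ?AR}"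
    have "(a \<union> b) \<inter> (R \<times> R) = a \<inter> (R \<times> R) \<union> b \<inter> (R \<times> R)" by auto
    thus "a \<union> b \<in> {S. S \<subseteq> X \<times> X \<and> S \<inter> (R \<times> R) \<in> prod_alg R ?AR}" using a b by auto
  qed auto
  moreover have "{B1 \<times> B2 |B1 B2. B1 \<in> A \<and> B2 \<in> A}
     \<subseteq> {S. S \<subseteq> X \<times> X \<and> S \<inter> (R \<times> R) \<in> prod_alg R ?AR}"
  proof -
    have "B1 \<times> B2 \<in> {S. S \<subseteq> X \<times> X \<and> S \<inter> (R \<times> R) \<in> prod_alg R ?AR}"
      if "B1 \<in> A" "B2 \<in> A" for B1 B2
    proof -
      have "B1 \<times> B2 \<subseteq> X \<times> X" using that A.space_closed by auto
      moreover have "(B1 \<times> B2) \<inter> (R \<times> R) = (B1 \<inter> R) \<times> (B2 \<inter> R)" by auto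
      moreover have "B1 \<inter> R \<in> ?AR" "B2 \<inter> R \<in> ?AR" using that assms(2) by auto
      moreover have "(B1 \<inter> R) \<times> (B2 \<inter> R) \<in> prod_alg R ?AR"
        using prod_alg_rect[of "B1 \<inter> R" ?AR "B2 \<inter> R" R] \<open>B1 \<inter> R \<in> ?AR\<close> \<open>B2 \<inter> R \<in> ?AR\<close> by blast
      ultimately show ?thesis by simp
    qed
    thus ?thesis by blast
  qed
  ultimately have "prod_alg X A \<subseteq> {S. S \<subseteq> X \<times> X \<and> S \<inter> (R \<times> R) \<in> prod_alg R ?AR}"
    unfolding prod_alg_def[of X] by (rule gen_algebra_min)
  thus ?thesis using assms(3) by blast
qed


lemma fa_subset: assumes "fin_additive M m" "M' \<subseteq> M" shows "fin_additive M' m"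
proof -
  have h1: "\<forall>B\<in>M. 0 \<le> m B" using assms(1) by (simp add: fin_additive_def)
  have h2: "\<forall>B1\<in>M. \<forall>B2\<in>M. B1 \<inter> B2 = {} \<longrightarrow> m (B1 \<union> B2) = m B1 + m B2"
    using assms(1) by (simp add: fin_additive_def)
  show ?thesis unfolding fin_additive_def
  proof (intro conjI ballI impI)
    fix B assume "B \<in> M'" thus "0 \<le> m B" using h1 assms(2) by (meson subsetD)
  next
    fix B1 B2 assume "B1 \<in> M'" "B2 \<in> M'" "B1 \<inter> B2 = {}"
    thus "m (B1 \<union> B2) = m B1 + m B2" using h2 assms(2) by (meson subsetD)
  qed
qed
lemma admD:
  assumes "admissible M"
  shows "carrier M \<noteq> {}" "algebra (carrier M) (alg M)" "fin_additive (alg M) (mu M)"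
    "fin_additive (prod_alg (carrier M) (alg M)) (mu2 M)"
    "\<forall>B1\<in>alg M. \<forall>B2\<in>alg M. mu2 M (B1 \<times> B2) = mu M B1 * mu M B2"
    "Rset M \<in> alg M" "Iset M \<in> alg M" "Rset M \<inter> Iset M = {}"
    "\<forall>x\<in>carrier M. Pi M x \<in> Rset M" "Grel M \<in> prod_alg (carrier M) (alg M)"
    "E0 M > 0" "0 \<le> eta M" "eta M \<le> 1"
    "\<forall>x\<in>carrier M. Pi M (Pi M x) = Pi M x" "\<forall>x\<in>Rset M. Pi M x = x"
    "\<forall>B\<in>alg M. B \<subseteq> Rset M \<longrightarrow> {x\<in>carrier M. Pi M x \<in> B} \<in> alg M"
    "\<forall>x\<in>carrier M. (x, x) \<in> Grel M" "sym (Grel M)" "Grel M O Grel M = Grel M"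
    "mu M (Rset M) + mu M (Iset M) = E0 M"
    "\<forall>B\<in>alg M. B \<subseteq> Rset M \<longrightarrow> mu M {x\<in>carrier M. Pi M x \<in> B} = mu M B"
    "\<forall>B\<in>alg M. mu2 M ((B \<times> carrier M) \<inter> Grel M) = mu M B + eta M * mu2 M (({x\<in>carrier M. Pi M x \<in> B} \<times> carrier M) \<inter> Grel M)"
  using assms unfolding admissible_def Let_def by simp_all

lemma key:
  assumes adm: "admissible M"
  shows "mu M (carrier M - Rset M) = 0" "mu M (Rset M) > 0" "Rset M \<subseteq> carrier M"
    "mu M (Rset M) = mu M (carrier M)"
proof -
  note D = admD[OF adm]
  interpret A: algebra "carrier M" "alg M" by (rule D(2))
  show RX: "Rset M \<subseteq> carrier M" using D(6) A.space_closed by auto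
  have "{x\<in>carrier M. Pi M x \<in> Rset M} = carrier M" using D(9) by auto
  hence eq: "mu M (carrier M) = mu M (Rset M)" using D(21) D(6) by (metis order_refl)
  have "mu M (carrier M) = mu M (Rset M) + mu M (carrier M - Rset M)"
    by (rule fa_diff[OF D(2,3) D(6) A.top RX])
  thus z: "mu M (carrier M - Rset M) = 0" using eq by simp
  show "mu M (Rset M) = mu M (carrier M)" using eq by simp
  have "Iset M \<subseteq> carrier M - Rset M" using D(7,8) A.space_closed by auto
  hence "mu M (Iset M) \<le> 0" using fa_mono[OF D(2,3) D(7), of "carrier M - Rset M"] z D(6) by auto
  thus "mu M (Rset M) > 0" using D(11) D(20) by simp
qed

lemma null2:
  assumes adm: "admissible M" and N: "N \<in> alg M" "mu M N = 0"
    and T: "T \<in> prod_alg (carrier M) (alg M)" "T \<subseteq> N \<times> carrier M \<union> carrier M \<times> N"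
  shows "mu2 M T = 0"
proof -
  note D = admD[OF adm]
  interpret A: algebra "carrier M" "alg M" by (rule D(2))
  interpret AA: algebra "carrier M \<times> carrier M" "prod_alg (carrier M) (alg M)"
    by (rule prod_alg_alg[OF D(2)])
  have r1: "N \<times> carrier M \<in> prod_alg (carrier M) (alg M)" using prod_alg_rect N by blast
  have r2: "carrier M \<times> N \<in> prod_alg (carrier M) (alg M)" using prod_alg_rect N by blast
  have "mu2 M T \<le> mu2 M (N \<times> carrier M \<union> carrier M \<times> N)"
    by (rule fa_mono[OF prod_alg_alg[OF D(2)] D(4) T(1) AA.Un[OF r1 r2] T(2)])
  also have "\<dots> \<le> mu2 M (N \<times> carrier M) + mu2 M (carrier M \<times> N)"
    by (rule fa_un_le[OF prod_alg_alg[OF D(2)] D(4) r1 r2])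
  also have "\<dots> = 0"
  proof -
    have "mu2 M (N \<times> carrier M) = mu M N * mu M (carrier M)" by (rule D(5)[rule_format, OF N(1) A.top])
    moreover have "mu2 M (carrier M \<times> N) = mu M (carrier M) * mu M N" by (rule D(5)[rule_format, OF A.top N(1)])
    ultimately show ?thesis using N(2) by simp
  qed
  finally show ?thesis using fa_nonneg[OF D(4) T(1)] by simp
qed

lemma restr_adm:
  assumes adm: "admissible M"
  shows "admissible (restrR M)"
proof -
  note D = admD[OF adm]
  note K = key[OF adm]
  interpret A: algebra "carrier M" "alg M" by (rule D(2))
  interpret AA: algebra "carrier M \<times> carrier M" "prod_alg (carrier M) (alg M)"
    by (rule prod_alg_alg[OF D(2)])
  let ?X = "carrier M" and ?R = "Rset M" and ?G = "Grel M"
  let ?AR = "{B \<in> alg M. B \<subseteq> ?R}"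
  have RX: "?R \<subseteq> ?X" by (rule K(3))
  have algR: "algebra ?R ?AR" unfolding algebra_iff_Un
  proof (intro conjI ballI)
    show "?AR \<subseteq> Pow ?R" by blast
    show "{} \<in> ?AR" using A.empty_sets by blast
  next
    fix a assume "a \<in> ?AR"
    thus "?R - a \<in> ?AR" using A.Diff[OF D(6)] by blast
  next
    fix a b assume "a \<in> ?AR" "b \<in> ?AR"
    thus "a \<union> b \<in> ?AR" using A.Un by blast
  qed
  have sub: "prod_alg ?R ?AR \<subseteq> prod_alg ?X (alg M)" by (rule prod_alg_sub[OF D(2,6)])
  have fa1: "fin_additive ?AR (mu M)" by (rule fa_subset[OF D(3)]) blast
  have fa2: "fin_additive (prod_alg ?R ?AR) (mu2 M)" by (rule fa_subset[OF D(4) sub])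
  have GR: "?G \<inter> (?R \<times> ?R) \<in> prod_alg ?R ?AR" by (rule prod_alg_trace[OF D(2,6,10)])
  have mu0: "mu M {} = 0" by (rule fa_empty[OF D(2,3)])
  have NR: "?X - ?R \<in> alg M" by (rule A.Diff[OF A.top D(6)])
  have ax3: "mu2 M ((B \<times> ?R) \<inter> ?G) = mu M B + eta M * mu2 M ((B \<times> ?R) \<inter> ?G)"
    if B: "B \<in> alg M" "B \<subseteq> ?R" for B
  proof -
    have BX: "B \<subseteq> ?X" using B RX by auto
    let ?PB = "{x\<in>?X. Pi M x \<in> B}"
    have PB: "?PB \<in> alg M" using D(16) B by simp
    have BPB: "B \<subseteq> ?PB" using B D(15) BX by auto
    have s1: "(B \<times> ?R) \<inter> ?G \<in> prod_alg ?X (alg M)" by (rule AA.Int[OF prod_alg_rect[OF B(1) D(6)] D(10)])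
    have s2: "(B \<times> ?X) \<inter> ?G \<in> prod_alg ?X (alg M)" by (rule AA.Int[OF prod_alg_rect[OF B(1) A.top] D(10)])
    have s3: "(?PB \<times> ?X) \<inter> ?G \<in> prod_alg ?X (alg M)" by (rule AA.Int[OF prod_alg_rect[OF PB A.top] D(10)])
    have "mu2 M ((B \<times> ?X) \<inter> ?G) = mu2 M ((B \<times> ?R) \<inter> ?G) + mu2 M ((B \<times> ?X) \<inter> ?G - (B \<times> ?R) \<inter> ?G)"
      by (rule fa_diff[OF prod_alg_alg[OF D(2)] D(4) s1 s2]) (use RX in auto)
    moreover have "mu2 M ((B \<times> ?X) \<inter> ?G - (B \<times> ?R) \<inter> ?G) = 0"
      by (rule null2[OF adm NR K(1)]) (use s1 s2 BX in auto)
    ultimately have a: "mu2 M ((B \<times> ?X) \<inter> ?G) = mu2 M ((B \<times> ?R) \<inter> ?G)" by simp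
    have dPB: "?PB - B \<in> alg M" using PB B by auto
    have "mu M ?PB = mu M B + mu M (?PB - B)" by (rule fa_diff[OF D(2,3) B(1) PB BPB])
    hence mz: "mu M (?PB - B) = 0" using D(21) B by simp
    have "mu2 M ((?PB \<times> ?X) \<inter> ?G) = mu2 M ((B \<times> ?X) \<inter> ?G) + mu2 M ((?PB \<times> ?X) \<inter> ?G - (B \<times> ?X) \<inter> ?G)"
      by (rule fa_diff[OF prod_alg_alg[OF D(2)] D(4) s2 s3]) (use BPB in auto)
    moreover have "mu2 M ((?PB \<times> ?X) \<inter> ?G - (B \<times> ?X) \<inter> ?G) = 0"
      by (rule null2[OF adm dPB mz]) (use s2 s3 in auto)
    ultimately have b: "mu2 M ((?PB \<times> ?X) \<inter> ?G) = mu2 M ((B \<times> ?X) \<inter> ?G)" by simp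
    have c: "mu2 M ((B \<times> ?X) \<inter> ?G) = mu M B + eta M * mu2 M ((?PB \<times> ?X) \<inter> ?G)"
      by (rule D(22)[rule_format, OF B(1)])
    show ?thesis using c unfolding b a .
  qed
  have cm: "\<And>B. B \<subseteq> ?R \<Longrightarrow> {x\<in>?R. x\<in>B} = B" by blast
  show ?thesis
    unfolding admissible_def Let_def restrR_def smodel.simps
  proof (intro conjI ballI allI impI)
    show "?R \<noteq> {}" using D(1,9) by blast
    show "algebra ?R ?AR" by (fact algR)
    show "fin_additive ?AR (mu M)" by (fact fa1)
    show "fin_additive (prod_alg ?R ?AR) (mu2 M)" by (fact fa2)
    show "?G \<inter> ?R \<times> ?R \<in> prod_alg ?R ?AR" by (fact GR)
    show "0 < mu M ?R" by (fact K(2))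
    show "?R \<in> ?AR" using D(6) by simp
    show "{} \<in> ?AR" using A.empty_sets by simp
    show "?R \<inter> {} = {}" by simp
  next
    fix B1 B2 assume "B1 \<in> ?AR" "B2 \<in> ?AR"
    thus "mu2 M (B1 \<times> B2) = mu M B1 * mu M B2" using D(5)[rule_format, of B1 B2] by simp
  next
    show "(?G \<inter> ?R \<times> ?R) O (?G \<inter> ?R \<times> ?R) = ?G \<inter> ?R \<times> ?R"
    proof
      show "(?G \<inter> ?R \<times> ?R) O (?G \<inter> ?R \<times> ?R) \<subseteq> ?G \<inter> ?R \<times> ?R" using D(19) by blast
      show "?G \<inter> ?R \<times> ?R \<subseteq> (?G \<inter> ?R \<times> ?R) O (?G \<inter> ?R \<times> ?R)"
      proof
        fix p assume p: "p \<in> ?G \<inter> ?R \<times> ?R"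
        then obtain x y where xy: "p = (x, y)" by (cases p)
        have "(x, x) \<in> ?G \<inter> ?R \<times> ?R" using p xy D(17) RX by auto
        thus "p \<in> (?G \<inter> ?R \<times> ?R) O (?G \<inter> ?R \<times> ?R)" using p xy by blast
      qed
    qed
    show "sym (?G \<inter> ?R \<times> ?R)" using D(18) unfolding sym_def by blast
  next
    fix B assume "B \<in> ?AR"
    thus "mu2 M ((B \<times> ?R) \<inter> (?G \<inter> ?R \<times> ?R)) = mu M B + eta M * mu2 M (({x \<in> ?R. x \<in> B} \<times> ?R) \<inter> (?G \<inter> ?R \<times> ?R))"
    proof -
      assume B: "B \<in> ?AR"
      have e1: "(B \<times> ?R) \<inter> (?G \<inter> ?R \<times> ?R) = (B \<times> ?R) \<inter> ?G" using B by blast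
      have e2: "{x \<in> ?R. x \<in> B} = B" using B by blast
      have "mu2 M ((B \<times> ?R) \<inter> ?G) = mu M B + eta M * mu2 M ((B \<times> ?R) \<inter> ?G)"
        using B by (intro ax3) simp_all
      thus ?thesis unfolding e2 e1 .
    qed
  qed (use D(12,13,17) mu0 RX in \<open>auto simp: cm\<close>)
qed

lemma morphD:
  assumes "is_morphism M M' \<phi>"
  shows "admissible M" "admissible M'" "eta M = eta M'"
    "\<forall>x\<in>carrier M. \<phi> x \<in> carrier M'"
    "\<forall>B'\<in>alg M'. {x\<in>carrier M. \<phi> x \<in> B'} \<in> alg M"
    "\<forall>S'\<in>prod_alg (carrier M') (alg M').
        {p\<in>carrier M \<times> carrier M. (\<phi> (fst p), \<phi> (snd p)) \<in> S'} \<in> prod_alg (carrier M) (alg M)"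
    "\<forall>x\<in>carrier M. \<phi> (Pi M x) = Pi M' (\<phi> x)"
    "\<forall>x y. (x, y) \<in> Grel M \<longrightarrow> (\<phi> x, \<phi> y) \<in> Grel M'"
    "\<forall>B'\<in>alg M'. mu M {x\<in>carrier M. \<phi> x \<in> B'} = mu M' B'"
    "\<forall>S'\<in>prod_alg (carrier M') (alg M').
        mu2 M {p\<in>carrier M \<times> carrier M. (\<phi> (fst p), \<phi> (snd p)) \<in> S'} = mu2 M' S'"
  using assms unfolding is_morphism_def by simp_all

lemma morph_R:
  assumes "is_morphism M M' \<phi>"
  shows "\<phi> ` Rset M \<subseteq> Rset M'"
proof
  note F = morphD[OF assms]
  note D = admD[OF F(1)] and D' = admD[OF F(2)]
  fix y assume "y \<in> \<phi> ` Rset M"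
  then obtain x where x: "x \<in> Rset M" "y = \<phi> x" by blast
  have xX: "x \<in> carrier M" using x(1) key(3)[OF F(1)] by blast
  have "\<phi> x = \<phi> (Pi M x)" using D(15) x(1) by simp
  also have "\<dots> = Pi M' (\<phi> x)" using F(7) xX by blast
  finally have "\<phi> x = Pi M' (\<phi> x)" .
  moreover have "Pi M' (\<phi> x) \<in> Rset M'" using D'(9) F(4) xX by blast
  ultimately show "y \<in> Rset M'" using x(2) by simp
qed

lemma restr_morph:
  assumes mor: "is_morphism M M' \<phi>"
  shows "is_morphism (restrR M) (restrR M') (restrict \<phi> (Rset M))"
proof -
  note F = morphD[OF mor]
  note D = admD[OF F(1)] and D' = admD[OF F(2)]
  note K = key[OF F(1)] and K' = key[OF F(2)]
  interpret A: algebra "carrier M" "alg M" by (rule D(2))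
  interpret AA: algebra "carrier M \<times> carrier M" "prod_alg (carrier M) (alg M)"
    by (rule prod_alg_alg[OF D(2)])
  let ?X = "carrier M" and ?R = "Rset M" and ?G = "Grel M"
  let ?X' = "carrier M'" and ?R' = "Rset M'" and ?G' = "Grel M'"
  let ?AR = "{B \<in> alg M. B \<subseteq> ?R}" and ?AR' = "{B \<in> alg M'. B \<subseteq> ?R'}"
  let ?f = "restrict \<phi> ?R"
  have RX: "?R \<subseteq> ?X" by (rule K(3))
  have RX': "?R' \<subseteq> ?X'" by (rule K'(3))
  have phR: "\<phi> ` ?R \<subseteq> ?R'" by (rule morph_R[OF mor])
  have NR: "?X - ?R \<in> alg M" by (rule A.Diff[OF A.top D(6)])
  have sub': "prod_alg ?R' ?AR' \<subseteq> prod_alg ?X' (alg M')" by (rule prod_alg_sub[OF D'(2,6)])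
  have RR: "?R \<times> ?R \<in> prod_alg ?X (alg M)" by (rule prod_alg_rect[OF D(6) D(6)])
  have m1: "{x\<in>?R. ?f x \<in> B'} \<in> ?AR \<and> mu M {x\<in>?R. ?f x \<in> B'} = mu M' B'" if B': "B' \<in> ?AR'" for B'
  proof -
    let ?P = "{x\<in>?X. \<phi> x \<in> B'}"
    have P: "?P \<in> alg M" using F(5) B' by simp
    have eq: "{x\<in>?R. ?f x \<in> B'} = ?P \<inter> ?R" using RX by auto
    have PR: "?P \<inter> ?R \<in> alg M" by (rule A.Int[OF P D(6)])
    have "mu M ?P = mu M (?P \<inter> ?R) + mu M (?P - ?P \<inter> ?R)"
      by (rule fa_diff[OF D(2,3) PR P]) blast
    moreover have "mu M (?P - ?P \<inter> ?R) \<le> mu M (?X - ?R)"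
      by (rule fa_mono[OF D(2,3) A.Diff[OF P PR] NR]) blast
    moreover have "0 \<le> mu M (?P - ?P \<inter> ?R)" by (rule fa_nonneg[OF D(3) A.Diff[OF P PR]])
    moreover have "mu M ?P = mu M' B'" using F(9) B' by simp
    ultimately have "mu M (?P \<inter> ?R) = mu M' B'" using K(1) by linarith
    thus ?thesis using eq PR by simp
  qed
  have m2: "{p\<in>?R \<times> ?R. (?f (fst p), ?f (snd p)) \<in> S'} \<in> prod_alg ?R ?AR \<and>
      mu2 M {p\<in>?R \<times> ?R. (?f (fst p), ?f (snd p)) \<in> S'} = mu2 M' S'"
    if S': "S' \<in> prod_alg ?R' ?AR'" for S'
  proof -
    let ?T = "{p\<in>?X \<times> ?X. (\<phi> (fst p), \<phi> (snd p)) \<in> S'}"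
    have S'X: "S' \<in> prod_alg ?X' (alg M')" using S' sub' by blast
    have T: "?T \<in> prod_alg ?X (alg M)" using F(6) S'X by simp
    have eq: "{p\<in>?R \<times> ?R. (?f (fst p), ?f (snd p)) \<in> S'} = ?T \<inter> (?R \<times> ?R)" using RX by auto
    have TR: "?T \<inter> (?R \<times> ?R) \<in> prod_alg ?X (alg M)" by (rule AA.Int[OF T RR])
    have "mu2 M ?T = mu2 M (?T \<inter> (?R \<times> ?R)) + mu2 M (?T - ?T \<inter> (?R \<times> ?R))"
      by (rule fa_diff[OF prod_alg_alg[OF D(2)] D(4) TR T]) blast
    moreover have "mu2 M (?T - ?T \<inter> (?R \<times> ?R)) = 0"
      by (rule null2[OF F(1) NR K(1) AA.Diff[OF T TR]]) blast
    moreover have "mu2 M ?T = mu2 M' S'" using F(10) S'X by simp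
    ultimately have "mu2 M (?T \<inter> (?R \<times> ?R)) = mu2 M' S'" by linarith
    moreover have "?T \<inter> (?R \<times> ?R) \<in> prod_alg ?R ?AR" by (rule prod_alg_trace[OF D(2,6) T])
    ultimately show ?thesis using eq by simp
  qed
  show ?thesis
    unfolding is_morphism_def
  proof (intro conjI ballI allI impI)
    show "admissible (restrR M)" by (rule restr_adm[OF F(1)])
    show "admissible (restrR M')" by (rule restr_adm[OF F(2)])
    show "eta (restrR M) = eta (restrR M')" using F(3) by (simp add: restrR_def)
  next
    fix x assume "x \<in> carrier (restrR M)"
    thus "?f x \<in> carrier (restrR M')" using phR by (auto simp: restrR_def)
  next
    fix B' assume "B' \<in> alg (restrR M')"
    thus "{x \<in> carrier (restrR M). ?f x \<in> B'} \<in> alg (restrR M)" using m1 by (simp add: restrR_def)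
  next
    fix S' assume "S' \<in> prod_alg (carrier (restrR M')) (alg (restrR M'))"
    thus "{p \<in> carrier (restrR M) \<times> carrier (restrR M). (?f (fst p), ?f (snd p)) \<in> S'}
          \<in> prod_alg (carrier (restrR M)) (alg (restrR M))" using m2 by (simp add: restrR_def)
  next
    fix x assume "x \<in> carrier (restrR M)"
    thus "?f (Pi (restrR M) x) = Pi (restrR M') (?f x)" by (simp add: restrR_def)
  next
    fix x y assume "(x, y) \<in> Grel (restrR M)"
    thus "(?f x, ?f y) \<in> Grel (restrR M')" using phR F(8) by (auto simp: restrR_def)
  next
    fix B' assume "B' \<in> alg (restrR M')"
    thus "mu (restrR M) {x \<in> carrier (restrR M). ?f x \<in> B'} = mu (restrR M') B'" using m1 by (simp add: restrR_def)
  next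
    fix S' assume "S' \<in> prod_alg (carrier (restrR M')) (alg (restrR M'))"
    thus "mu2 (restrR M) {p \<in> carrier (restrR M) \<times> carrier (restrR M). (?f (fst p), ?f (snd p)) \<in> S'}
          = mu2 (restrR M') S'" using m2 by (simp add: restrR_def)
  qed
qed

theorem proposition8p11:
  fixes \<eta> :: real
  assumes "0 \<le> \<eta>" and "\<eta> < 1"
  shows
    "(\<forall>M :: 'a smodel. fib_obj \<eta> M \<longrightarrow> id_obj \<eta> (restrR M) \<and> mu M (Rset M) > 0)
     \<and> (\<forall>(M :: 'a smodel) (M' :: 'b smodel) \<phi>.
          fib_obj \<eta> M \<and> fib_obj \<eta> M' \<and> is_morphism M M' \<phi> \<longrightarrow>
          \<phi> ` Rset M \<subseteq> Rset M' \<and>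
          is_morphism (restrR M) (restrR M') (restrict \<phi> (Rset M)))
     \<and> (\<forall>M :: 'a smodel. fib_obj \<eta> M \<longrightarrow>
          restrict (restrict id (carrier M)) (Rset M) = restrict id (carrier (restrR M)))
     \<and> (\<forall>(M :: 'a smodel) (M' :: 'b smodel) (M'' :: 'c smodel) \<phi> \<psi>.
          fib_obj \<eta> M \<and> fib_obj \<eta> M' \<and> fib_obj \<eta> M'' \<and>
          is_morphism M M' \<phi> \<and> is_morphism M' M'' \<psi> \<longrightarrow>
          restrict (\<psi> \<circ> \<phi>) (Rset M) =
          restrict (restrict \<psi> (Rset M') \<circ> restrict \<phi> (Rset M)) (Rset M))"
proof (intro conjI allI impI)
  fix M :: "'a smodel" assume f: "fib_obj \<eta> M"
  hence adm: "admissible M" and et: "eta M = \<eta>" by (simp_all add: fib_obj_def struct_obj_def)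
  show "id_obj \<eta> (restrR M)"
    using restr_adm[OF adm] et by (simp add: id_obj_def struct_obj_def restrR_def)
  show "mu M (Rset M) > 0" by (rule key(2)[OF adm])
next
  fix M :: "'a smodel" and M' :: "'b smodel" and \<phi>
  assume h: "fib_obj \<eta> M \<and> fib_obj \<eta> M' \<and> is_morphism M M' \<phi>"
  thus "\<phi> ` Rset M \<subseteq> Rset M'" using morph_R by blast
  show "is_morphism (restrR M) (restrR M') (restrict \<phi> (Rset M))" using h restr_morph by blast
next
  fix M :: "'a smodel" assume f: "fib_obj \<eta> M"
  hence adm: "admissible M" by (simp add: fib_obj_def struct_obj_def)
  have RX: "Rset M \<subseteq> carrier M" by (rule key(3)[OF adm])
  show "restrict (restrict id (carrier M)) (Rset M) = restrict id (carrier (restrR M))"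
  proof
    fix x show "restrict (restrict id (carrier M)) (Rset M) x = restrict id (carrier (restrR M)) x"
      using RX by (auto simp: restrR_def)
  qed
next
  fix M :: "'a smodel" and M' :: "'b smodel" and M'' :: "'c smodel" and \<phi> \<psi>
  assume h: "fib_obj \<eta> M \<and> fib_obj \<eta> M' \<and> fib_obj \<eta> M'' \<and> is_morphism M M' \<phi> \<and> is_morphism M' M'' \<psi>"
  hence phR: "\<phi> ` Rset M \<subseteq> Rset M'" using morph_R by blast
  show "restrict (\<psi> \<circ> \<phi>) (Rset M) = restrict (restrict \<psi> (Rset M') \<circ> restrict \<phi> (Rset M)) (Rset M)"
  proof
    fix x show "restrict (\<psi> \<circ> \<phi>) (Rset M) x = restrict (restrict \<psi> (Rset M') \<circ> restrict \<phi> (Rset M)) (Rset M) x"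
      using phR by auto
  qed
qed

end
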